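(* Let $\mathcal{B}$ be a Borel-measurable partition of $\Omega$ with $\underline{P}(B)>0$ for all $B\in\mathcal{B}$, and let $A\in\mathscr{B}(\Omega)$. Suppose that one of the two rules (Dempster's rule, the Geometric rule) satisfies $\inf_{B\in\mathcal{B}}\underline{P}_\bullet(A\mid B)>\overline{P}(A)$ and the other satisfies $\sup_{B\in\mathcal{B}}\overline{P}_\bullet(A\mid B)<\underline{P}(A)$. Then $\mathcal{B}$ strictly dilates $A$ under the generalized Bayes rule, i.e. $\sup_{B\in\mathcal{B}}\underline{P}_{\mathfrak{B}}(A\mid B)<\underline{P}(A)\le\overline{P}(A)<\inf_{B\in\mathcal{B}}\overline{P}_{\mathfrak{B}}(A\mid B)$.
   Context: $\Omega$ is a separable, completely metrizable space with Borel $\sigma$-algebra $\mathscr{B}(\Omega)$; $\underline{P}$ is a Choquet capacity of order 2 on $\mathscr{B}(\Omega)$ (a coherent lower probability with weakly compact set of dominating measures satisfying $\underline{P}(A\cup B)\ge\underline{P}(A)+\underline{P}(B)-\underline{P}(A\cap B)$); $\Pi=\{P:P\ge\underline{P}\}$, $\underline{P}(A)=\inf_{P\in\Pi}P(A)$, $\overline{P}(A)=\sup_{P\in\Pi}P(A)=1-\underline{P}(A^c)$. Generalized Bayes rule: $\underline{P}_{\mathfrak{B}}(A\mid B)=\inf_{P\in\Pi}P(A\cap B)/P(B)$, $\overline{P}_{\mathfrak{B}}(A\mid B)=\sup_{P\in\Pi}P(A\cap B)/P(B)$. Dempster's rule: $\overline{P}_{\mathfrak{D}}(A\mid B)=\overline{P}(A\cap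 B)/\overline{P}(B)$, $\underline{P}_{\mathfrak{D}}(A\mid B)=1-\overline{P}_{\mathfrak{D}}(A^c\mid B)$. Geometric rule: $\underline{P}_{\mathfrak{G}}(A\mid B)=\underline{P}(A\cap B)/\underline{P}(B)$, $\overline{P}_{\mathfrak{G}}(A\mid B)=1-\underline{P}_{\mathfrak{G}}(A^c\mid B)$. In the paper's terminology, the first hypothesis is "$\mathcal{B}$ incurs sure loss in $A$" and the second "sure gain". *)

theory Defs
  imports "HOL-Probability.Probability"
begin

definition borel_probs :: "('a::topological_space) measure set" where
  "borel_probs = {P. prob_space P \<and> sets P = sets borel}"

definition weak_conv_seq :: "(nat \<Rightarrow> ('a::topological_space) measure) \<Rightarrow> 'a measure \<Rightarrow> bool" where
  "weak_conv_seq Ps P \<longleftrightarrow>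
     (\<forall>f::'a \<Rightarrow> real. continuous_on UNIV f \<and> bounded (range f) \<longrightarrow>
        (\<lambda>n. integral\<^sup>L (Ps n) f) \<longlonglongrightarrow> integral\<^sup>L P f)"

text \<open>Weak compactness (sequential form; equivalent on Polish spaces, where the
  weak topology on probability measures is metrizable).\<close>
definition weakly_seq_compact :: "('a::topological_space) measure set \<Rightarrow> bool" where
  "weakly_seq_compact S \<longleftrightarrow>
     (\<forall>Ps. (\<forall>n. Ps n \<in> S) \<longrightarrow>
        (\<exists>(r::nat \<Rightarrow> nat) P. strict_mono r \<and> P \<in> S \<and> weak_conv_seq (Ps \<circ> r) P))"

definition credal :: "('a::topological_space set \<Rightarrow> real) \<Rightarrow> 'a measure set" where
  "credal lP = {P \<in> borel_probs. \<forall>A \<in> sets borel. lP A \<le> measure P A}"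

definition upper :: "('a set \<Rightarrow> real) \<Rightarrow> 'a set \<Rightarrow> real" where
  "upper lP A = 1 - lP (- A)"

text \<open>Choquet capacity of order 2, as in the paper: coherent lower probability
  (lower envelope of its credal set) whose credal set is weakly compact and
  which is 2-monotone.\<close>
definition choquet2 :: "('a::topological_space set \<Rightarrow> real) \<Rightarrow> bool" where
  "choquet2 lP \<longleftrightarrow>
     (\<forall>A \<in> sets borel. lP A = (INF P \<in> credal lP. measure P A)) \<and>
     credal lP \<noteq> {} \<and>
     weakly_seq_compact (credal lP) \<and>
     (\<forall>A \<in> sets borel. \<forall>B \<in> sets borel. lP (A \<union> B) \<ge> lP A + lP B - lP (A \<inter> B))"

definition lower_GB :: "('a::topological_space set \<Rightarrow> real) \<Rightarrow> 'a set \<Rightarrow> 'a set \<Rightarrow> real" where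
  "lower_GB lP A B = (INF P \<in> credal lP. measure P (A \<inter> B) / measure P B)"
definition upper_GB :: "('a::topological_space set \<Rightarrow> real) \<Rightarrow> 'a set \<Rightarrow> 'a set \<Rightarrow> real" where
  "upper_GB lP A B = (SUP P \<in> credal lP. measure P (A \<inter> B) / measure P B)"

definition upper_D :: "('a set \<Rightarrow> real) \<Rightarrow> 'a set \<Rightarrow> 'a set \<Rightarrow> real" where
  "upper_D lP A B = upper lP (A \<inter> B) / upper lP B"
definition lower_D :: "('a set \<Rightarrow> real) \<Rightarrow> 'a set \<Rightarrow> 'a set \<Rightarrow> real" where
  "lower_D lP A B = 1 - upper_D lP (- A) B"

definition lower_G :: "('a set \<Rightarrow> real) \<Rightarrow> 'a set \<Rightarrow> 'a set \<Rightarrow> real" where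
  "lower_G lP A B = lP (A \<inter> B) / lP B"
definition upper_G :: "('a set \<Rightarrow> real) \<Rightarrow> 'a set \<Rightarrow> 'a set \<Rightarrow> real" where
  "upper_G lP A B = 1 - lower_G lP (- A) B"

definition borel_partition :: "('a::topological_space) set set \<Rightarrow> bool" where
  "borel_partition \<B> \<longleftrightarrow> \<B> \<subseteq> sets borel \<and> {} \<notin> \<B> \<and> \<Union>\<B> = UNIV \<and>
     (\<forall>B1 \<in> \<B>. \<forall>B2 \<in> \<B>. B1 \<noteq> B2 \<longrightarrow> B1 \<inter> B2 = {})"

end

theory Submission
  imports Defs
begin

lemma cred_basic:
  assumes "P \<in> credal lP"
  shows "prob_space P" "sets P = sets borel" "space P = UNIV"
    "\<And>X. X \<in> sets borel \<Longrightarrow> lP X \<le> measure P X"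
  using assms unfolding credal_def borel_probs_def
  by (auto dest: sets_eq_imp_space_eq)

lemma cred_compl:
  assumes "P \<in> credal lP" "X \<in> sets borel"
  shows "measure P (- X) = 1 - measure P X"
proof -
  interpret prob_space P using cred_basic(1)[OF assms(1)] .
  have "X \<in> events" using cred_basic(2)[OF assms(1)] assms(2) by simp
  from prob_compl[OF this] show ?thesis using cred_basic(3)[OF assms(1)]
    by (simp add: Compl_eq_Diff_UNIV)
qed

lemma cred_01:
  assumes "P \<in> credal lP" "X \<in> sets borel"
  shows "0 \<le> measure P X" "measure P X \<le> 1"
proof -
  interpret prob_space P using cred_basic(1)[OF assms(1)] .
  show "0 \<le> measure P X" by simp
  show "measure P X \<le> 1" by (rule prob_le_1)
qed

lemma cred_mono:
  assumes "P \<in> credal lP" "X \<in> sets borel" "Y \<in> sets borel" "X \<subseteq> Y"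
  shows "measure P X \<le> measure P Y"
proof -
  interpret prob_space P using cred_basic(1)[OF assms(1)] .
  show ?thesis using assms cred_basic(2)[OF assms(1)]
    by (intro finite_measure_mono) auto
qed

lemma cred_diff:
  assumes "P \<in> credal lP" "X \<in> sets borel" "B \<in> sets borel"
  shows "measure P (- X \<inter> B) = measure P B - measure P (X \<inter> B)"
proof -
  interpret prob_space P using cred_basic(1)[OF assms(1)] .
  have e: "- X \<inter> B = B - X" "X \<inter> B = B \<inter> X" by auto
  show ?thesis unfolding e using assms cred_basic(2)[OF assms(1)] finite_measure_Diff'[of B X]
    by simp
qed

context
  fixes lP :: "('a::topological_space) set \<Rightarrow> real"
  assumes cap: "choquet2 lP"
begin

lemma lP_INF: "X \<in> sets borel \<Longrightarrow> lP X = (INF P \<in> credal lP. measure P X)"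
  using cap unfolding choquet2_def by blast

lemma cred_ne: "credal lP \<noteq> {}"
  using cap unfolding choquet2_def by blast

lemma lP_01:
  assumes "X \<in> sets borel"
  shows "0 \<le> lP X" "lP X \<le> 1"
proof -
  obtain P where P: "P \<in> credal lP" using cred_ne by blast
  show "0 \<le> lP X" unfolding lP_INF[OF assms]
    by (rule cINF_greatest[OF cred_ne]) (use cred_01 assms in blast)
  show "lP X \<le> 1" using cred_basic(4)[OF P assms] cred_01(2)[OF P assms] by linarith
qed

lemma lP_mono:
  assumes "X \<in> sets borel" "Y \<in> sets borel" "X \<subseteq> Y"
  shows "lP X \<le> lP Y"
  unfolding lP_INF[OF assms(2)]
  by (rule cINF_greatest[OF cred_ne])
     (use cred_basic(4) cred_mono assms in fastforce)

lemma upper_ge: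
  assumes "P \<in> credal lP" "X \<in> sets borel"
  shows "measure P X \<le> upper lP X"
  using cred_basic(4)[OF assms(1), of "- X"] cred_compl[OF assms] assms(2)
  unfolding upper_def by auto

lemma lP_le_upper:
  assumes "X \<in> sets borel"
  shows "lP X \<le> upper lP X"
proof -
  obtain P where P: "P \<in> credal lP" using cred_ne by blast
  show ?thesis using cred_basic(4)[OF P assms] upper_ge[OF P assms] by linarith
qed

lemma upper_01:
  assumes "X \<in> sets borel"
  shows "0 \<le> upper lP X" "upper lP X \<le> 1"
  using lP_01[of "- X"] assms unfolding upper_def by auto

lemma upper_mono:
  assumes "X \<in> sets borel" "Y \<in> sets borel" "X \<subseteq> Y"
  shows "upper lP X \<le> upper lP Y"
  using lP_mono[of "- Y" "- X"] assms unfolding upper_def by auto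

lemma ratio_01:
  assumes P: "P \<in> credal lP" and X: "X \<in> sets borel" and B: "B \<in> sets borel" and pB: "lP B > 0"
  shows "0 \<le> measure P (X \<inter> B) / measure P B" "measure P (X \<inter> B) / measure P B \<le> 1"
    "measure P B > 0"
proof -
  have XB: "X \<inter> B \<in> sets borel" using X B by auto
  have pos: "measure P B > 0" using cred_basic(4)[OF P B] pB by linarith
  have le: "measure P (X \<inter> B) \<le> measure P B" using cred_mono[OF P XB B] by auto
  show "0 \<le> measure P (X \<inter> B) / measure P B" using cred_01(1)[OF P XB] pos by simp
  show "measure P (X \<inter> B) / measure P B \<le> 1" using le pos by simp
  show "measure P B > 0" by (rule pos)
qed

lemma bdd_ratio:
  assumes X: "X \<in> sets borel" and B: "B \<in> sets borel" and pB: "lP B > 0"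
  shows "bdd_above ((\<lambda>P. measure P (X \<inter> B) / measure P B) ` credal lP)"
    "bdd_below ((\<lambda>P. measure P (X \<inter> B) / measure P B) ` credal lP)"
  using ratio_01[OF _ X B pB]
  by (auto intro!: bdd_aboveI[where M=1] bdd_belowI[where m=0])

lemma L1:
  assumes X: "X \<in> sets borel" and B: "B \<in> sets borel" and pB: "lP B > 0"
  shows "lP (X \<inter> B) / lP B \<le> upper_GB lP X B"
proof -
  define S where "S = upper_GB lP X B"
  have XB: "X \<inter> B \<in> sets borel" using X B by auto
  obtain P0 where P0: "P0 \<in> credal lP" using cred_ne by blast
  have up: "measure P (X \<inter> B) / measure P B \<le> S" if "P \<in> credal lP" for P
    unfolding S_def upper_GB_def by (rule cSUP_upper[OF that bdd_ratio(1)[OF X B pB]])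
  have S0: "0 \<le> S" using up[OF P0] ratio_01(1)[OF P0 X B pB] by linarith
  have key: "lP (X \<inter> B) \<le> S * measure P B" if P: "P \<in> credal lP" for P
  proof -
    have pos: "measure P B > 0" using ratio_01(3)[OF P X B pB] .
    have "measure P (X \<inter> B) \<le> S * measure P B"
      using up[OF P] pos by (simp add: divide_le_eq)
    then show ?thesis using cred_basic(4)[OF P XB] by linarith
  qed
  show ?thesis
  proof (cases "S = 0")
    case True
    then have "lP (X \<inter> B) \<le> 0" using key[OF P0] by simp
    then show ?thesis using True S_def pB by (simp add: divide_le_0_iff)
  next
    case False
    then have Sp: "S > 0" using S0 by simp
    have "lP (X \<inter> B) / S \<le> lP B" unfolding lP_INF[OF B]
      by (rule cINF_greatest[OF cred_ne]) (use key Sp in \<open>simp add: divide_le_eq mult.commute\<close>)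
    then have "lP (X \<inter> B) \<le> S * lP B" using Sp by (simp add: divide_le_eq mult.commute)
    then show ?thesis using pB S_def by (simp add: divide_le_eq)
  qed
qed

lemma L2:
  assumes X: "X \<in> sets borel" and B: "B \<in> sets borel" and pB: "lP B > 0"
  shows "lower_GB lP X B \<le> upper lP (X \<inter> B) / upper lP B"
proof -
  define I where "I = lower_GB lP X B"
  define u where "u = upper lP (X \<inter> B)"
  have XB: "X \<inter> B \<in> sets borel" using X B by auto
  have uB: "upper lP B > 0" using lP_le_upper[OF B] pB by linarith
  have u0: "0 \<le> u" using upper_01[OF XB] u_def by simp
  have lo: "I \<le> measure P (X \<inter> B) / measure P B" if "P \<in> credal lP" for P
    unfolding I_def lower_GB_def by (rule cINF_lower[OF bdd_ratio(2)[OF X B pB] that])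
  have I0: "0 \<le> I" unfolding I_def lower_GB_def
    by (rule cINF_greatest[OF cred_ne]) (use ratio_01(1)[OF _ X B pB] in blast)
  have key: "I - u \<le> I * measure P (- B)" if P: "P \<in> credal lP" for P
  proof -
    have pos: "measure P B > 0" using ratio_01(3)[OF P X B pB] .
    have "I * measure P B \<le> measure P (X \<inter> B)"
      using lo[OF P] pos by (simp add: le_divide_eq)
    also have "\<dots> \<le> u" using upper_ge[OF P XB] u_def by simp
    finally have "I * measure P B \<le> u" .
    moreover have "measure P B = 1 - measure P (- B)" using cred_compl[OF P B] by simp
    ultimately have "I * (1 - measure P (- B)) \<le> u" by simp
    then show ?thesis by (simp add: right_diff_distrib)
  qed
  show ?thesis
  proof (cases "I = 0")
    case True
    then show ?thesis using I_def u_def u0 uB by simp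
  next
    case False
    then have Ip: "I > 0" using I0 by simp
    have CB: "- B \<in> sets borel" using B by auto
    have "(I - u) / I \<le> lP (- B)" unfolding lP_INF[OF CB]
      by (rule cINF_greatest[OF cred_ne]) (use key Ip in \<open>simp add: divide_le_eq mult.commute\<close>)
    then have "I - u \<le> I * lP (- B)" using Ip by (simp add: divide_le_eq mult.commute)
    then have "I * upper lP B \<le> u" unfolding upper_def by (simp add: algebra_simps)
    then show ?thesis using uB I_def u_def by (simp add: le_divide_eq)
  qed
qed

lemma L3a:
  assumes X: "X \<in> sets borel" and B: "B \<in> sets borel" and pB: "lP B > 0"
  shows "1 - upper_GB lP X B \<le> lower_GB lP (- X) B"
  unfolding lower_GB_def
proof (rule cINF_greatest[OF cred_ne])
  fix P assume P: "P \<in> credal lP"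
  have pos: "measure P B > 0" using ratio_01(3)[OF P X B pB] .
  have "measure P (X \<inter> B) / measure P B \<le> upper_GB lP X B"
    unfolding upper_GB_def by (rule cSUP_upper[OF P bdd_ratio(1)[OF X B pB]])
  moreover have "measure P (- X \<inter> B) / measure P B = 1 - measure P (X \<inter> B) / measure P B"
    using cred_diff[OF P X B] pos by (simp add: diff_divide_distrib)
  ultimately show "1 - upper_GB lP X B \<le> measure P (- X \<inter> B) / measure P B" by simp
qed

lemma L3b:
  assumes X: "X \<in> sets borel" and B: "B \<in> sets borel" and pB: "lP B > 0"
  shows "upper_GB lP (- X) B \<le> 1 - lower_GB lP X B"
  unfolding upper_GB_def
proof (rule cSUP_least[OF cred_ne])
  fix P assume P: "P \<in> credal lP"
  have pos: "measure P B > 0" using ratio_01(3)[OF P X B pB] .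
  have "lower_GB lP X B \<le> measure P (X \<inter> B) / measure P B"
    unfolding lower_GB_def by (rule cINF_lower[OF bdd_ratio(2)[OF X B pB] P])
  moreover have "measure P (- X \<inter> B) / measure P B = 1 - measure P (X \<inter> B) / measure P B"
    using cred_diff[OF P X B] pos by (simp add: diff_divide_distrib)
  ultimately show "measure P (- X \<inter> B) / measure P B \<le> 1 - lower_GB lP X B" by simp
qed

end

theorem corollary5p5:
  fixes lP :: "('a::polish_space) set \<Rightarrow> real"
    and \<B> :: "'a set set"
    and A :: "'a set"
  assumes cap: "choquet2 lP"
    and part: "borel_partition \<B>"
    and pos: "\<forall>B \<in> \<B>. lP B > 0"
    and A_borel: "A \<in> sets borel"
    and hyp: "((INF B \<in> \<B>. lower_D lP A B) > upper lP A \<and> (SUP B \<in> \<B>. upper_G lP A B) < lP A)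
            \<or> ((INF B \<in> \<B>. lower_G lP A B) > upper lP A \<and> (SUP B \<in> \<B>. upper_D lP A B) < lP A)"
  shows "(SUP B \<in> \<B>. lower_GB lP A B) < lP A \<and> lP A \<le> upper lP A
         \<and> upper lP A < (INF B \<in> \<B>. upper_GB lP A B)"
proof -
  have Bb: "B \<in> sets borel" if "B \<in> \<B>" for B using part that unfolding borel_partition_def by auto
  have ne: "\<B> \<noteq> {}" using part unfolding borel_partition_def by auto
  have CA: "- A \<in> sets borel" using A_borel by auto
  have uBp: "upper lP B > 0" if "B \<in> \<B>" for B
    using lP_le_upper[OF cap Bb[OF that]] pos that by fastforce
  have gD: "lower_D lP A B \<le> upper_GB lP A B" if "B \<in> \<B>" for B
    using L2[OF cap CA Bb[OF that]] L3a[OF cap A_borel Bb[OF that]] pos that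
    unfolding lower_D_def upper_D_def by fastforce
  have gG: "lower_G lP A B \<le> upper_GB lP A B" if "B \<in> \<B>" for B
    using L1[OF cap A_borel Bb[OF that]] pos that unfolding lower_G_def by fastforce
  have hG: "lower_GB lP A B \<le> upper_G lP A B" if "B \<in> \<B>" for B
    using L1[OF cap CA Bb[OF that]] L3b[OF cap A_borel Bb[OF that]] pos that
    unfolding upper_G_def lower_G_def by fastforce
  have hD: "lower_GB lP A B \<le> upper_D lP A B" if "B \<in> \<B>" for B
    using L2[OF cap A_borel Bb[OF that]] pos that unfolding upper_D_def by fastforce
  have bD: "bdd_below ((\<lambda>B. lower_D lP A B) ` \<B>)"
  proof (rule bdd_belowI[where m=0])
    fix x assume "x \<in> (\<lambda>B. lower_D lP A B) ` \<B>"
    then obtain B where B: "B \<in> \<B>" and x: "x = lower_D lP A B" by auto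
    have "upper lP (- A \<inter> B) \<le> upper lP B" using upper_mono[OF cap, of "- A \<inter> B" B] CA Bb[OF B] by auto
    then show "0 \<le> x" using x uBp[OF B] unfolding lower_D_def upper_D_def by (simp add: divide_le_eq)
  qed
  have bG: "bdd_below ((\<lambda>B. lower_G lP A B) ` \<B>)"
  proof (rule bdd_belowI[where m=0])
    fix x assume "x \<in> (\<lambda>B. lower_G lP A B) ` \<B>"
    then obtain B where B: "B \<in> \<B>" and x: "x = lower_G lP A B" by auto
    show "0 \<le> x" using x pos B lP_01(1)[OF cap, of "A \<inter> B"] A_borel Bb[OF B]
      unfolding lower_G_def by auto
  qed
  have aG: "bdd_above ((\<lambda>B. upper_G lP A B) ` \<B>)"
  proof (rule bdd_aboveI[where M=1])
    fix x assume "x \<in> (\<lambda>B. upper_G lP A B) ` \<B>"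
    then obtain B where B: "B \<in> \<B>" and x: "x = upper_G lP A B" by auto
    show "x \<le> 1" using x pos B lP_01(1)[OF cap, of "- A \<inter> B"] CA Bb[OF B]
      unfolding upper_G_def lower_G_def by auto
  qed
  have aD: "bdd_above ((\<lambda>B. upper_D lP A B) ` \<B>)"
  proof (rule bdd_aboveI[where M=1])
    fix x assume "x \<in> (\<lambda>B. upper_D lP A B) ` \<B>"
    then obtain B where B: "B \<in> \<B>" and x: "x = upper_D lP A B" by auto
    have "upper lP (A \<inter> B) \<le> upper lP B" using upper_mono[OF cap, of "A \<inter> B" B] A_borel Bb[OF B] by auto
    then show "x \<le> 1" using x uBp[OF B] unfolding upper_D_def by (simp add: divide_le_eq)
  qed
  have mid: "lP A \<le> upper lP A" using lP_le_upper[OF cap A_borel] .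
  have sup_le: "(SUP B \<in> \<B>. lower_GB lP A B) \<le> (SUP B \<in> \<B>. h B)"
    if "bdd_above (h ` \<B>)" "\<And>B. B \<in> \<B> \<Longrightarrow> lower_GB lP A B \<le> h B" for h
  proof (rule cSUP_least[OF ne])
    fix B assume B: "B \<in> \<B>"
    show "lower_GB lP A B \<le> (SUP B \<in> \<B>. h B)"
      using that(2)[OF B] cSUP_upper[OF B that(1)] by linarith
  qed
  have inf_ge: "(INF B \<in> \<B>. g B) \<le> (INF B \<in> \<B>. upper_GB lP A B)"
    if "bdd_below (g ` \<B>)" "\<And>B. B \<in> \<B> \<Longrightarrow> g B \<le> upper_GB lP A B" for g
  proof (rule cINF_greatest[OF ne])
    fix B assume B: "B \<in> \<B>"
    show "(INF B \<in> \<B>. g B) \<le> upper_GB lP A B"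
      using that(2)[OF B] cINF_lower[OF that(1) B] by linarith
  qed
  from hyp show ?thesis
  proof
    assume h: "(INF B \<in> \<B>. lower_D lP A B) > upper lP A \<and> (SUP B \<in> \<B>. upper_G lP A B) < lP A"
    show ?thesis using h mid sup_le[OF aG hG] inf_ge[OF bD gD] by linarith
  next
    assume h: "(INF B \<in> \<B>. lower_G lP A B) > upper lP A \<and> (SUP B \<in> \<B>. upper_D lP A B) < lP A"
    show ?thesis using h mid sup_le[OF aD hD] inf_ge[OF bG gG] by linarith
  qed
qed

end
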